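(* Let $b\geq2$, $n\geq2$, $\alpha_1,\dots,\alpha_n>0$, $y_1=0$ and let $y_2,\dots,y_n\in[0,1)$ be $b$-adic rational numbers. Then the multivariate multifractal Legendre spectrum, based on second-order oscillations, of $L_{\alpha_1}^{b,-y_1},\dots,L_{\alpha_n}^{b,-y_n}$ is $$\mathcal{L}(H_1,\dots,H_n)=\begin{cases}\frac{H_1}{\alpha_1}, & \text{if } (H_1,\dots,H_n)\in[0,\alpha_1]\times\cdots\times[0,\alpha_n] \text{ and } H_i=\frac{\alpha_i}{\alpha_1}H_1 \text{ for all } 2\le i\le n,\\ -\infty, & \text{otherwise.}\end{cases}$$
   Context: Fix an integer $b\geq 2$. The saw-tooth function is $\{x\}=x-\lfloor x\rfloor-\frac12$ if $x\notin\mathbb{Z}$ and $\{x\}=0$ if $x\in\mathbb{Z}$. For $\alpha>0$ the Lévy function is $L_\alpha^b(x)=\sum_{i\geq1}\{b^ix\}\,b^{-\alpha i}$, and for $y\in\mathbb{R}$ the shifted Lévy function is $L_\alpha^{b,y}(x)=L_\alpha^b(x-y)$ (so $L_\alpha^{b,-y}(x)=L_\alpha^b(x+y)$). $b$-adic grid: for $j\in\mathbb{N}$, $k\in\mathbb{Z}$, $\lambda=\lambda(j,k)=[kb^{-j},(k+1)b^{-j})$ and $3\lambda=[(k-1)b^{-j},(k+2)b^{-j})$. $\Lambda_j$ denotes the set of the $b^j$ such intervals of width $b^{-j}$ contained in $[0,1)$. Second-order difference: $\Delta_f^2(x,h)=f(x+2h)-2f(x+h)+f(x)$. The oscillation of $f$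 on $3\lambda$ is $d_\lambda(f)=\sup\{|\Delta_f^2(x,h)|:\ x,\,x+2h\in3\lambda\}$. For functions $f_1,\dots,f_d$ with $d_\lambda^{(i)}=d_\lambda(f_i)$: structure function $S(r,j)=b^{-j}\sum_{\lambda\in\Lambda_j}\prod_{i=1}^d (d_\lambda^{(i)})^{r_i}$ for $r\in\mathbb{R}^d$; scaling function $\zeta(r)=\liminf_{j\to\infty}\frac{\log S(r,j)}{\log b^{-j}}$; multivariate multifractal Legendre spectrum $\mathcal{L}_{f_1,\dots,f_d}(H)=\inf_{r\in\mathbb{R}^d}\big(1-\zeta(r)+H\cdot r\big)$ for $H\in\mathbb{R}^d$ (value $-\infty$ allowed). *)

theory Defs
  imports "HOL-Analysis.Analysis"
begin

definition sawtooth :: "real \<Rightarrow> real" where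
  "sawtooth x = (if x \<in> \<int> then 0 else x - of_int \<lfloor>x\<rfloor> - 1/2)"

definition levy :: "nat \<Rightarrow> real \<Rightarrow> real \<Rightarrow> real" where
  "levy b \<alpha> x = (\<Sum>i. sawtooth (real b ^ (Suc i) * x) * real b powr (- \<alpha> * real (Suc i)))"

definition shifted_levy :: "nat \<Rightarrow> real \<Rightarrow> real \<Rightarrow> real \<Rightarrow> real" where
  "shifted_levy b \<alpha> y x = levy b \<alpha> (x - y)"

definition delta2 :: "(real \<Rightarrow> real) \<Rightarrow> real \<Rightarrow> real \<Rightarrow> real" where
  "delta2 f x h = f (x + 2 * h) - 2 * f (x + h) + f x"

text \<open>3 lambda for lambda = lambda(j,k) = [k b^-j, (k+1) b^-j).\<close>
definition three_lambda :: "nat \<Rightarrow> nat \<Rightarrow> int \<Rightarrow> real set" where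
  "three_lambda b j k = {(of_int k - 1) / real b ^ j ..< (of_int k + 2) / real b ^ j}"

definition osc :: "nat \<Rightarrow> (real \<Rightarrow> real) \<Rightarrow> nat \<Rightarrow> int \<Rightarrow> real" where
  "osc b f j k = Sup {\<bar>delta2 f x h\<bar> | x h. x \<in> three_lambda b j k \<and> x + 2 * h \<in> three_lambda b j k}"

definition structure_fun ::
  "nat \<Rightarrow> nat \<Rightarrow> (nat \<Rightarrow> real \<Rightarrow> real) \<Rightarrow> (nat \<Rightarrow> real) \<Rightarrow> nat \<Rightarrow> real" where
  "structure_fun b n fs r j =
     (1 / real b ^ j) * (\<Sum>k\<in>{0..<b ^ j}. \<Prod>i\<in>{1..n}. osc b (fs i) j (int k) powr r i)"

definition scaling_fun ::
  "nat \<Rightarrow> nat \<Rightarrow> (nat \<Rightarrow> real \<Rightarrow> real) \<Rightarrow> (nat \<Rightarrow> real) \<Rightarrow> ereal" where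
  "scaling_fun b n fs r =
     liminf (\<lambda>j. ereal (ln (structure_fun b n fs r j) / ln (1 / real b ^ j)))"

definition legendre_spectrum ::
  "nat \<Rightarrow> nat \<Rightarrow> (nat \<Rightarrow> real \<Rightarrow> real) \<Rightarrow> (nat \<Rightarrow> real) \<Rightarrow> ereal" where
  "legendre_spectrum b n fs H =
     (INF r \<in> UNIV. 1 - scaling_fun b n fs r + ereal (\<Sum>i\<in>{1..n}. H i * r i))"

definition b_adic_rational :: "nat \<Rightarrow> real \<Rightarrow> bool" where
  "b_adic_rational b y \<longleftrightarrow> (\<exists>(k::int) (m::nat). y = of_int k / real b ^ m)"

end

theory Submission
  imports Defs "HOL-Real_Asymp.Real_Asymp"
begin


lemma saw_bound: "\<bar>sawtooth u\<bar> \<le> 1/2"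
proof (cases "u \<in> \<int>")
  case True thus ?thesis by (simp add: sawtooth_def)
next
  case False
  have "of_int \<lfloor>u\<rfloor> \<le> u" "u < of_int \<lfloor>u\<rfloor> + 1" by linarith+
  moreover have "sawtooth u = u - of_int \<lfloor>u\<rfloor> - 1/2" using False by (simp add: sawtooth_def)
  ultimately show ?thesis unfolding abs_le_iff by linarith
qed

lemma saw_nonint: "u \<notin> \<int> \<Longrightarrow> sawtooth u = u - of_int \<lfloor>u\<rfloor> - 1/2"
  by (simp add: sawtooth_def)

lemma saw_int: "u \<in> \<int> \<Longrightarrow> sawtooth u = 0"
  by (simp add: sawtooth_def)

lemma not_int_floor: "\<lfloor>v\<rfloor> = z \<Longrightarrow> of_int z < v \<Longrightarrow> v \<notin> \<int>"
  by (metis Ints_cases floor_of_int less_irrefl)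

lemma saw_affine:
  assumes "u1 \<notin> \<int>" "u2 \<notin> \<int>" "u3 \<notin> \<int>" "\<lfloor>u1\<rfloor> = \<lfloor>u2\<rfloor>" "\<lfloor>u2\<rfloor> = \<lfloor>u3\<rfloor>"
    "u3 - 2*u2 + u1 = 0"
  shows "sawtooth u3 - 2 * sawtooth u2 + sawtooth u1 = 0"
  using assms by (simp add: saw_nonint algebra_simps)

lemma saw_D_int:
  assumes "u \<in> \<int>" "0 < \<delta>" "2*\<delta> < 1"
  shows "sawtooth (u + 2*\<delta>) - 2 * sawtooth (u + \<delta>) + sawtooth u = 1/2"
proof -
  obtain z where z: "u = of_int z" using assms(1) Ints_cases by blast
  have f1: "\<lfloor>u + \<delta>\<rfloor> = z" using z assms by (simp add: floor_eq_iff)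
  have f2: "\<lfloor>u + 2*\<delta>\<rfloor> = z" using z assms by (simp add: floor_eq_iff)
  have n1: "u + \<delta> \<notin> \<int>" by (rule not_int_floor[OF f1]) (use z assms in simp)
  have n2: "u + 2*\<delta> \<notin> \<int>" by (rule not_int_floor[OF f2]) (use z assms in simp)
  show ?thesis using f1 f2 n1 n2 assms z by (simp add: saw_nonint saw_int)
qed

lemma saw_D_grid:
  fixes Q d :: int and \<delta> :: real
  assumes "d \<ge> 1" "0 < \<delta>" "2*\<delta> * of_int d < 1"
  shows "sawtooth (Q/d + 2*\<delta>) - 2 * sawtooth (Q/d + \<delta>) + sawtooth (Q/d) \<ge> 0"
proof (cases "(Q/d::real) \<in> \<int>")
  case True
  have "2*\<delta> < 1" using assms by (smt (verit) mult_le_cancel_left1 of_int_less_1_iff)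
  thus ?thesis using saw_D_int[OF True assms(2)] by simp
next
  case False
  let ?f = "Q div d" and ?r = "Q mod d"
  have Q: "real_of_int Q = of_int (?f * d + ?r)" by simp
  have r1: "0 \<le> ?r" "?r \<le> d - 1" using assms(1) by (simp_all add: pos_mod_sign)
  have fl: "\<lfloor>Q/d\<rfloor> = ?f" using assms(1) by (simp add: floor_divide_of_int_eq)
  have dpos: "real_of_int d > 0" using assms by simp
  have Q': "real_of_int Q = of_int ?f * of_int d + of_int ?r" by (metis div_mult_mod_eq of_int_add of_int_mult)
  have u: "(Q/d::real) = ?f + ?r/d" using dpos by (subst Q') (simp add: field_simps)
  have rr: "real_of_int ?r \<le> real_of_int (d - 1)" using r1(2) by (simp only: of_int_le_iff)
  have "?r/d \<le> (d-1)/d" using divide_right_mono[OF rr, of "real_of_int d"] dpos by simp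
  have "2*\<delta> < 1/d" using assms dpos by (simp add: field_simps)
  have lt: "Q/d + 2*\<delta> < ?f + 1"
  proof -
    have "(?r::real)/d + 2*\<delta> < (d-1)/d + 1/d" using \<open>?r/d \<le> (d-1)/d\<close> \<open>2*\<delta> < 1/d\<close> by linarith
    also have "\<dots> = 1" using dpos by (simp add: field_simps)
    finally show ?thesis using u by linarith
  qed
  have ge1: "of_int ?f \<le> (Q/d::real)" using fl of_int_floor_le[of "Q/d"] by simp
  have ge2: "of_int ?f \<noteq> (Q/d::real)" using False by (metis Ints_of_int)
  have ge: "of_int ?f < (Q/d::real)" using ge1 ge2 by simp
  have f1: "\<lfloor>Q/d + \<delta>\<rfloor> = ?f" using lt ge assms by (simp add: floor_eq_iff)
  have f2: "\<lfloor>Q/d + 2*\<delta>\<rfloor> = ?f" using lt ge assms by (simp add: floor_eq_iff)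
  have n1: "Q/d + \<delta> \<notin> \<int>" by (rule not_int_floor[OF f1]) (use ge assms in simp)
  have n2: "Q/d + 2*\<delta> \<notin> \<int>" by (rule not_int_floor[OF f2]) (use ge assms in simp)
  have "sawtooth (Q/d + 2*\<delta>) - 2 * sawtooth (Q/d + \<delta>) + sawtooth (Q/d) = 0"
    by (rule saw_affine) (use False n1 n2 f1 f2 fl in auto)
  thus ?thesis by simp
qed

lemma saw_D_bound: "\<bar>sawtooth a - 2 * sawtooth b + sawtooth c\<bar> \<le> 2"
  using saw_bound[of a] saw_bound[of b] saw_bound[of c] by linarith



definition DD :: "nat \<Rightarrow> real \<Rightarrow> real \<Rightarrow> real \<Rightarrow> nat \<Rightarrow> real" where
  "DD b y x h i = sawtooth (real b ^ Suc i * (x + 2*h + y)) - 2 * sawtooth (real b ^ Suc i * (x + h + y))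
     + sawtooth (real b ^ Suc i * (x + y))"

lemma DD_bound: "\<bar>DD b y x h i\<bar> \<le> 2"
  unfolding DD_def by (rule saw_D_bound)

lemma w_facts:
  assumes "b \<ge> 2" "\<alpha> > 0"
  shows "0 < real b powr (-\<alpha>)" "real b powr (-\<alpha>) < 1"
  using assms by (auto intro!: powr_less_one)

lemma powr_Suc_eq:
  assumes "b \<ge> 2"
  shows "real b powr (- \<alpha> * real (Suc i)) = (real b powr (-\<alpha>)) ^ Suc i"
proof -
  have "real b powr (- \<alpha> * real (Suc i)) = (real b powr (-\<alpha>)) powr real (Suc i)"
    by (simp add: powr_powr)
  also have "\<dots> = (real b powr (-\<alpha>)) ^ Suc i" using assms by (subst powr_realpow) auto
  finally show ?thesis .
qed

lemma summable_wSuc: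
  fixes w :: real assumes "0 < w" "w < 1"
  shows "summable (\<lambda>i. w ^ Suc i)"
  using assms by (simp add: summable_mult)

lemma levy_eq:
  assumes "b \<ge> 2"
  shows "levy b \<alpha> z = (\<Sum>i. sawtooth (real b ^ Suc i * z) * (real b powr (-\<alpha>)) ^ Suc i)"
  unfolding levy_def using powr_Suc_eq[OF assms] by simp

lemma summable_saw_terms:
  fixes w :: real assumes "0 < w" "w < 1"
  shows "summable (\<lambda>i. sawtooth (c i) * w ^ Suc i)"
proof (rule summable_comparison_test'[OF summable_wSuc[OF assms]])
  fix i
  have "\<bar>sawtooth (c i)\<bar> * w ^ Suc i \<le> 1 * w^Suc i"
    using saw_bound[of "c i"] assms by (intro mult_right_mono) auto
  thus "norm (sawtooth (c i) * w ^ Suc i) \<le> w ^ Suc i" using assms by (simp add: abs_mult)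
qed

lemma delta2_levy:
  assumes "b \<ge> 2" "\<alpha> > 0"
  defines "w \<equiv> real b powr (-\<alpha>)"
  shows "(\<lambda>i. DD b y x h i * w ^ Suc i) sums delta2 (shifted_levy b \<alpha> (-y)) x h"
proof -
  have w: "0 < w" "w < 1" using w_facts[OF assms(1,2)] by (auto simp: w_def)
  have lv: "\<And>z. shifted_levy b \<alpha> (-y) z = (\<Sum>i. sawtooth (real b ^ Suc i * (z + y)) * w ^ Suc i)"
    unfolding shifted_levy_def w_def by (simp add: levy_eq[OF assms(1)])
  let ?A = "\<lambda>t i. sawtooth (real b ^ Suc i * (x + t*h + y)) * w ^ Suc i"
  have s: "\<And>t. ?A t sums (\<Sum>i. ?A t i)" by (rule summable_sums[OF summable_saw_terms[OF w]])
  have "(\<lambda>i. ?A 2 i - 2 * ?A 1 i + ?A 0 i) sums ((\<Sum>i. ?A 2 i) - 2 * (\<Sum>i. ?A 1 i) + (\<Sum>i. ?A 0 i))"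
    by (intro sums_add sums_diff sums_mult s)
  moreover have "(\<lambda>i. ?A 2 i - 2 * ?A 1 i + ?A 0 i) = (\<lambda>i. DD b y x h i * w ^ Suc i)"
    by (rule ext) (simp add: DD_def algebra_simps)
  moreover have "delta2 (shifted_levy b \<alpha> (-y)) x h = (\<Sum>i. ?A 2 i) - 2 * (\<Sum>i. ?A 1 i) + (\<Sum>i. ?A 0 i)"
    unfolding delta2_def lv by (simp add: add.assoc)
  ultimately show ?thesis by simp
qed

lemma tail_sums:
  fixes w :: real assumes "0 < w" "w < 1" "e \<ge> 1"
  shows "(\<lambda>i. if Suc i < e then 0 else w ^ Suc i) sums (w^e / (1 - w))"
proof -
  let ?f = "\<lambda>i. if Suc i < e then 0 else w ^ Suc i"
  have "(\<lambda>i. w^e * w^i) sums (w^e * (1/(1-w)))"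
    by (rule sums_mult) (use assms geometric_sums[of w] in auto)
  moreover have "(\<lambda>i. ?f (i + (e - 1))) = (\<lambda>i. w^e * w^i)"
    using assms(3) by (auto simp: power_add[symmetric] intro!: ext) (metis Suc_diff_1 add.commute add_Suc_right less_one add_diff_inverse_nat)
  ultimately have "(\<lambda>i. ?f (i + (e - 1))) sums (w^e/(1-w))" by simp
  moreover have "(\<Sum>i<e-1. ?f i) = 0" by (intro sum.neutral) auto
  ultimately show ?thesis by (subst (asm) sums_iff_shift) simp
qed



lemma floor_const:
  fixes c :: real
  assumes c: "c > 0" and z1: "z1 \<in> {a..<a'}" and z2: "z2 \<in> {a..<a'}"
    and noint: "\<forall>z\<in>{a..<a'}. c*(z+y) \<notin> \<int>"
  shows "\<lfloor>c*(z1+y)\<rfloor> = \<lfloor>c*(z2+y)\<rfloor>"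
proof -
  have main: "\<lfloor>c*(u+y)\<rfloor> = \<lfloor>c*(v+y)\<rfloor>" if uv: "u \<le> v" "u \<in> {a..<a'}" "v \<in> {a..<a'}" for u v
  proof (rule ccontr)
    assume ne: "\<lfloor>c*(u+y)\<rfloor> \<noteq> \<lfloor>c*(v+y)\<rfloor>"
    have "c*(u+y) \<le> c*(v+y)" using uv c by (intro mult_left_mono) auto
    hence le: "\<lfloor>c*(u+y)\<rfloor> \<le> \<lfloor>c*(v+y)\<rfloor>" by (rule floor_mono)
    let ?n = "\<lfloor>c*(v+y)\<rfloor>"
    have lt: "c*(u+y) < of_int ?n" using le ne floor_less_iff by fastforce
    have le2: "of_int ?n \<le> c*(v+y)" by (rule of_int_floor_le)
    define z where "z = of_int ?n / c - y"
    have cz: "c*(z+y) = of_int ?n" using c by (simp add: z_def)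
    have "u + y < of_int ?n / c" using lt c by (simp add: field_simps)
    hence "u \<le> z" by (simp add: z_def)
    have "of_int ?n / c \<le> v + y" using le2 c by (simp add: field_simps)
    hence "z \<le> v" by (simp add: z_def)
    have "z \<in> {a..<a'}" using \<open>u \<le> z\<close> \<open>z \<le> v\<close> uv by auto
    thus False using noint cz by (metis Ints_of_int)
  qed
  show ?thesis
  proof (cases "z1 \<le> z2")
    case True thus ?thesis using main z1 z2 by blast
  next
    case False thus ?thesis using main[of z2 z1] z1 z2 by simp
  qed
qed

lemma DD_zero_affine:
  assumes b: "b \<ge> 2" and x: "x \<in> {a..<a'}" and x2: "x + 2*h \<in> {a..<a'}"
    and noint: "\<forall>z\<in>{a..<a'}. real b ^ Suc i * (z + y) \<notin> \<int>"
  shows "DD b y x h i = 0"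
proof -
  have x1: "x + h \<in> {a..<a'}" using x x2 by (cases "h \<ge> 0") auto
  let ?c = "real b ^ Suc i"
  have c: "?c > 0" using b by simp
  have e1: "x + 2*h + y = (x + 2*h) + y" "x + h + y = (x+h) + y" by simp_all
  have n1: "?c * (x + y) \<notin> \<int>" "?c * (x + h + y) \<notin> \<int>" "?c * (x + 2*h + y) \<notin> \<int>"
    using noint x x1 x2 by auto
  have mid: "?c * (x + 2*h + y) - 2 * (?c * (x + h + y)) + ?c * (x + y) = 0" by (simp add: algebra_simps)
  show ?thesis unfolding DD_def
    by (rule saw_affine[OF n1(1) n1(2) n1(3)])
       (use floor_const[OF c x1 x2 noint] floor_const[OF c x x1 noint] mid in auto)
qed

lemma delta_upper_pt:
  assumes b: "b \<ge> 2" and al: "\<alpha> > 0" and x: "x \<in> {a..<a'}" and x2: "x + 2*h \<in> {a..<a'}"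
    and e: "e \<ge> 1"
    and noint: "\<forall>p. 1 \<le> p \<and> p < e \<longrightarrow> (\<forall>z\<in>{a..<a'}. real b ^ p * (z + y) \<notin> \<int>)"
  shows "\<bar>delta2 (shifted_levy b \<alpha> (-y)) x h\<bar> \<le> 2 * (real b powr (-\<alpha>))^e / (1 - real b powr (-\<alpha>))"
proof -
  define w where "w = real b powr (-\<alpha>)"
  have w: "0 < w" "w < 1" using w_facts[OF b al] by (auto simp: w_def)
  let ?f = "\<lambda>i. DD b y x h i * w ^ Suc i"
  let ?g = "\<lambda>i. 2 * (if Suc i < e then 0 else w ^ Suc i)"
  have sf: "?f sums delta2 (shifted_levy b \<alpha> (-y)) x h" using delta2_levy[OF b al] by (simp add: w_def)
  have sg: "?g sums (2 * (w^e/(1-w)))" by (rule sums_mult[OF tail_sums[OF w e]])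
  have fg: "norm (?f i) \<le> ?g i" for i
  proof (cases "Suc i < e")
    case True
    have "DD b y x h i = 0"
      by (rule DD_zero_affine[OF b x x2]) (use noint True in auto)
    thus ?thesis using True by simp
  next
    case False
    have "\<bar>DD b y x h i\<bar> * w ^ Suc i \<le> 2 * w ^ Suc i"
      using DD_bound w by (intro mult_right_mono) auto
    thus ?thesis using False w by (simp add: abs_mult)
  qed
  have sn: "summable (\<lambda>i. norm (?f i))"
    by (rule summable_comparison_test'[OF sums_summable[OF sg]]) (use fg in auto)
  have "\<bar>delta2 (shifted_levy b \<alpha> (-y)) x h\<bar> = norm (suminf ?f)" using sf sums_unique by fastforce
  also have "\<dots> \<le> (\<Sum>i. norm (?f i))" by (rule summable_norm[OF sn])
  also have "\<dots> \<le> suminf ?g" by (rule suminf_le[OF fg sn sums_summable[OF sg]])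
  also have "\<dots> = 2 * (w^e/(1-w))" using sg sums_unique by fastforce
  finally show ?thesis by (simp add: w_def)
qed

definition oscset :: "(real \<Rightarrow> real) \<Rightarrow> real \<Rightarrow> real \<Rightarrow> real set" where
  "oscset f a a' = {\<bar>delta2 f x h\<bar> | x h. x \<in> {a..<a'} \<and> x + 2 * h \<in> {a..<a'}}"

lemma oscset_bdd:
  assumes b: "b \<ge> 2" and al: "\<alpha> > 0"
  shows "bdd_above (oscset (shifted_levy b \<alpha> (-y)) a a')"
  unfolding oscset_def bdd_above_def
  using delta_upper_pt[OF b al, of _ a a' _ 1 y] by auto

lemma osc_le:
  assumes b: "b \<ge> 2" and al: "\<alpha> > 0" and aa: "a < a'" and e: "e \<ge> 1"
    and noint: "\<forall>p. 1 \<le> p \<and> p < e \<longrightarrow> (\<forall>z\<in>{a..<a'}. real b ^ p * (z + y) \<notin> \<int>)"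
  shows "Sup (oscset (shifted_levy b \<alpha> (-y)) a a') \<le> 2 * (real b powr (-\<alpha>))^e / (1 - real b powr (-\<alpha>))"
proof (rule cSup_least)
  have "\<bar>delta2 (shifted_levy b \<alpha> (- y)) a 0\<bar> \<in> oscset (shifted_levy b \<alpha> (- y)) a a'"
    unfolding oscset_def using aa by force
  thus "oscset (shifted_levy b \<alpha> (- y)) a a' \<noteq> {}" by blast
next
  fix v assume "v \<in> oscset (shifted_levy b \<alpha> (- y)) a a'"
  then obtain x h where "v = \<bar>delta2 (shifted_levy b \<alpha> (-y)) x h\<bar>" "x \<in> {a..<a'}" "x + 2*h \<in> {a..<a'}"
    unfolding oscset_def by blast
  thus "v \<le> 2 * (real b powr (-\<alpha>))^e / (1 - real b powr (-\<alpha>))"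
    using delta_upper_pt[OF b al _ _ e noint] by simp
qed



lemma grid_rep:
  fixes Q :: int and x0 y h :: real
  assumes b: "b \<ge> 2" and Q: "x0 + y = of_int Q / real b ^ e" and pN: "p \<le> N" and eN: "e \<le> N"
    and h: "h = 1 / (4 * real b ^ N)"
  shows "\<exists>Q' (d::int). d \<ge> 1 \<and> real b ^ p * (x0 + y) = of_int Q' / of_int d
          \<and> 2 * (real b ^ p * h) * of_int d < 1"
proof (cases "p \<le> e")
  case True
  have be: "real b ^ e = real b ^ p * real b ^ (e - p)" using True by (simp add: power_add[symmetric])
  have bpos: "real b ^ p > 0" "real b ^ (e-p) > 0" using b by auto
  have "real b ^ p * (x0 + y) = of_int Q / real b ^ (e - p)"
    using Q be bpos by (simp add: field_simps)
  moreover have "2 * (real b ^ p * h) * real b ^ (e-p) < 1"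
  proof -
    have "2 * (real b ^ p * h) * real b ^ (e-p) = real b ^ e / (2 * real b ^ N)"
      using be h by (simp add: field_simps)
    also have "\<dots> \<le> 1/2" using b eN by (simp add: field_simps power_increasing)
    finally show ?thesis by simp
  qed
  ultimately show ?thesis
    by (intro exI[of _ Q] exI[of _ "int (b^(e-p))"]) (use b in auto)
next
  case False
  have be: "real b ^ p = real b ^ e * real b ^ (p - e)" using False by (simp add: power_add[symmetric])
  have bpos: "real b ^ e > 0" using b by auto
  have u: "real b ^ e * (x0 + y) = of_int Q" using Q bpos by (simp add: field_simps)
  have "real b ^ p * (x0 + y) = real b ^ (p - e) * (real b ^ e * (x0 + y))" by (simp add: be)
  hence "real b ^ p * (x0 + y) = of_int (Q * int b ^ (p - e)) / of_int 1"
    using u by simp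
  moreover have "2 * (real b ^ p * h) * of_int 1 < 1"
  proof -
    have "2 * (real b ^ p * h) = real b ^ p / (2 * real b ^ N)" using h by (simp add: field_simps)
    also have "\<dots> \<le> 1/2" using b pN by (simp add: field_simps power_increasing)
    finally show ?thesis by simp
  qed
  ultimately show ?thesis by (intro exI[of _ "Q * int b ^ (p - e)"] exI[of _ 1]) auto
qed

lemma delta_lower_pt:
  assumes b: "b \<ge> 2" and al: "\<alpha> > 0" and x0: "x0 \<in> {a..<a'}" and e: "e \<ge> 1"
    and Q: "x0 + y = of_int Q / real b ^ e"
  shows "\<exists>x h. x \<in> {a..<a'} \<and> x + 2*h \<in> {a..<a'} \<and>
     delta2 (shifted_levy b \<alpha> (-y)) x h \<ge> (real b powr (-\<alpha>))^e / 4"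
proof -
  define w where "w = real b powr (-\<alpha>)"
  have w: "0 < w" "w < 1" using w_facts[OF b al] by (auto simp: w_def)
  have bq: "norm (1 / real b) < 1" using b by simp
  have ev1: "eventually (\<lambda>N. w ^ N < w^e * (1 - w) / 8) sequentially"
    by (rule order_tendstoD(2)[OF LIMSEQ_power_zero]) (use w in auto)
  have ev2: "eventually (\<lambda>N. (1 / real b) ^ N < a' - x0) sequentially"
    by (rule order_tendstoD(2)[OF LIMSEQ_power_zero[OF bq]]) (use x0 in auto)
  have "eventually (\<lambda>N. e \<le> N \<and> w ^ N < w^e * (1 - w) / 8 \<and> (1 / real b) ^ N < a' - x0) sequentially"
    using ev1 ev2 eventually_ge_at_top[of e] by eventually_elim auto
  then obtain N where eN: "e \<le> N" and N1: "w ^ N < w^e * (1 - w) / 8"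
    and N2: "(1 / real b) ^ N < a' - x0" unfolding eventually_sequentially by blast
  define h where "h = 1 / (4 * real b ^ N)"
  have hpos: "h > 0" using b by (simp add: h_def)
  have "2 * h \<le> (1 / real b) ^ N" using b by (simp add: h_def power_divide field_simps)
  hence x2: "x0 + 2*h \<in> {a..<a'}" using x0 N2 hpos by auto
  have DDnn: "DD b y x0 h i \<ge> 0" if iN: "Suc i \<le> N" for i
  proof -
    obtain Q' d where d: "d \<ge> 1" and u: "real b ^ Suc i * (x0 + y) = of_int Q' / of_int d"
      and sm: "2 * (real b ^ Suc i * h) * of_int d < 1"
      using grid_rep[OF b Q iN eN h_def] by blast
    have dp: "(0::real) < real b ^ Suc i * h" using b hpos by simp
    have "sawtooth (Q'/d + 2*(real b ^ Suc i * h)) - 2 * sawtooth (Q'/d + real b ^ Suc i * h)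
          + sawtooth (Q'/d) \<ge> 0"
      by (rule saw_D_grid[OF d dp sm])
    moreover have "real b ^ Suc i * (x0 + 2*h + y) = Q'/d + 2*(real b ^ Suc i * h)"
      "real b ^ Suc i * (x0 + h + y) = Q'/d + real b ^ Suc i * h"
      using u by (simp_all add: algebra_simps)
    ultimately show ?thesis unfolding DD_def using u by simp
  qed
  have DDe: "DD b y x0 h (e - 1) = 1/2"
  proof -
    have Se: "Suc (e - 1) = e" using e by simp
    have u: "real b ^ e * (x0 + y) = of_int Q" using Q b by simp
    have dp: "(0::real) < real b ^ e * h" using b hpos by simp
    have sm: "2 * (real b ^ e * h) < 1"
    proof -
      have "2 * (real b ^ e * h) = real b ^ e / (2 * real b ^ N)" by (simp add: h_def field_simps)
      also have "\<dots> \<le> 1/2" using b eN by (simp add: field_simps power_increasing)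
      finally show ?thesis by simp
    qed
    have "sawtooth (of_int Q + 2*(real b ^ e * h)) - 2 * sawtooth (of_int Q + real b ^ e * h)
          + sawtooth (of_int Q) = 1/2"
      by (rule saw_D_int[OF _ dp sm]) simp
    moreover have "real b ^ e * (x0 + 2*h + y) = of_int Q + 2*(real b ^ e * h)"
      "real b ^ e * (x0 + h + y) = of_int Q + real b ^ e * h"
      using u by (simp_all add: algebra_simps)
    ultimately show ?thesis unfolding DD_def Se using u by simp
  qed
  let ?f = "\<lambda>i. DD b y x0 h i * w ^ Suc i"
  let ?g1 = "\<lambda>i. if i = e - 1 then w^e/2 else 0"
  let ?g2 = "\<lambda>i. -2 * (if Suc i < Suc N then 0 else w ^ Suc i)"
  have sf: "?f sums delta2 (shifted_levy b \<alpha> (-y)) x0 h" using delta2_levy[OF b al] by (simp add: w_def)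
  have s1: "?g1 sums (w^e/2)" using sums_single[of "e - 1" "\<lambda>_. w^e/2"] by simp
  have s2: "?g2 sums (-2 * (w ^ Suc N / (1 - w)))" by (rule sums_mult[OF tail_sums[OF w]]) simp
  have sg: "(\<lambda>i. ?g1 i + ?g2 i) sums (w^e/2 + -2 * (w ^ Suc N / (1 - w)))" by (rule sums_add[OF s1 s2])
  have fg: "?g1 i + ?g2 i \<le> ?f i" for i
  proof (cases "i = e - 1")
    case True
    hence Si: "Suc i = e" using e by simp
    have A: "?f i = w^e/2" using DDe True Si by simp
    have B: "?g1 i + ?g2 i = w^e/2" using True Si eN by simp
    show ?thesis using A B by linarith
  next
    case False
    show ?thesis
    proof (cases "Suc i \<le> N")
      case True thus ?thesis using False DDnn[OF True] w by simp
    next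
      case nle: False
      have "-2 * w ^ Suc i \<le> DD b y x0 h i * w ^ Suc i"
        using DD_bound[of b y x0 h i] w by (intro mult_right_mono) auto
      thus ?thesis using False nle by simp
    qed
  qed
  have "w^e/2 + -2 * (w ^ Suc N / (1 - w)) \<le> delta2 (shifted_levy b \<alpha> (-y)) x0 h"
    using sums_le[OF fg sg sf] .
  moreover have "w^e/4 \<le> w^e/2 + -2 * (w ^ Suc N / (1 - w))"
  proof -
    have "w ^ Suc N = w * w^N" by simp
    also have "\<dots> \<le> 1 * (w^e * (1 - w) / 8)" using N1 w by (intro mult_mono) auto
    finally have "w ^ Suc N \<le> w^e * (1 - w) / 8" by simp
    hence "w ^ Suc N / (1 - w) \<le> w^e / 8" using w by (simp add: field_simps)
    thus ?thesis by linarith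
  qed
  ultimately have fin: "w^e/4 \<le> delta2 (shifted_levy b \<alpha> (-y)) x0 h" by linarith
  show ?thesis unfolding w_def[symmetric] using x0 x2 fin by blast
qed



definition GG :: "nat \<Rightarrow> nat \<Rightarrow> nat \<Rightarrow> nat \<Rightarrow> bool" where
  "GG b j k e \<longleftrightarrow> (\<exists>q::int. of_int q / real b ^ e \<in> three_lambda b j (int k))"

definition mm :: "nat \<Rightarrow> nat \<Rightarrow> nat \<Rightarrow> nat" where
  "mm b j k = (LEAST e. 1 \<le> e \<and> GG b j k e)"

lemma GG_j: assumes "b \<ge> 2" shows "GG b j k j"
  unfolding GG_def three_lambda_def using assms
  by (intro exI[of _ "int k"]) (auto simp: divide_right_mono divide_strict_right_mono)

lemma mm_props:
  assumes b: "b \<ge> 2" and j: "j \<ge> 1"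
  shows "1 \<le> mm b j k" "mm b j k \<le> j" "GG b j k (mm b j k)"
    "\<And>e. 1 \<le> e \<Longrightarrow> e < mm b j k \<Longrightarrow> \<not> GG b j k e"
proof -
  have ex: "1 \<le> j \<and> GG b j k j" using j GG_j[OF b] by simp
  show "1 \<le> mm b j k" "GG b j k (mm b j k)" unfolding mm_def using LeastI[of "\<lambda>e. 1 \<le> e \<and> GG b j k e" j, OF ex] by auto
  show "mm b j k \<le> j" unfolding mm_def by (rule Least_le[of "\<lambda>e. 1 \<le> e \<and> GG b j k e", OF ex])
  show "\<And>e. 1 \<le> e \<Longrightarrow> e < mm b j k \<Longrightarrow> \<not> GG b j k e"
    unfolding mm_def using not_less_Least by blast
qed

lemma mm_0: assumes b: "b \<ge> 2" and j: "j \<ge> 1" shows "mm b j 0 = 1"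
proof -
  have "GG b j 0 1" unfolding GG_def three_lambda_def using b
    by (intro exI[of _ 0]) (auto simp: field_simps)
  hence "mm b j 0 \<le> 1" unfolding mm_def by (intro Least_le) simp
  thus ?thesis using mm_props(1)[OF b j, of 0] by simp
qed

lemma osc_eq: "osc b f j (int k) = Sup (oscset f ((real k - 1) / real b ^ j) ((real k + 2) / real b ^ j))"
  unfolding osc_def oscset_def three_lambda_def by simp

lemma GG_iff: "GG b j k e \<longleftrightarrow> (\<exists>q::int. of_int q / real b ^ e \<in> {(real k - 1) / real b ^ j..<(real k + 2) / real b ^ j})"
  unfolding GG_def three_lambda_def by simp

lemma osc_upper_mm:
  fixes Y :: int
  assumes b: "b \<ge> 2" and al: "\<alpha> > 0" and j: "j \<ge> 1" and K: "K \<ge> 1"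
    and y: "y = of_int Y / real b ^ K"
  defines "w \<equiv> real b powr (-\<alpha>)"
  shows "osc b (shifted_levy b \<alpha> (-y)) j (int k) \<le> 2 / ((1 - w) * w^K) * w ^ mm b j k"
proof -
  have w: "0 < w" "w < 1" using w_facts[OF b al] by (auto simp: w_def)
  let ?a = "(real k - 1) / real b ^ j" and ?a' = "(real k + 2) / real b ^ j"
  have aa: "?a < ?a'" using b by (simp add: divide_strict_right_mono)
  let ?m = "mm b j k"
  have bpos: "real b > 0" using b by simp
  show ?thesis
  proof (cases "K < ?m")
    case True
    have noint: "\<forall>p. 1 \<le> p \<and> p < ?m \<longrightarrow> (\<forall>z\<in>{?a..<?a'}. real b ^ p * (z + y) \<notin> \<int>)"
    proof (intro allI impI ballI notI)
      fix p z assume p: "1 \<le> p \<and> p < ?m" and z: "z \<in> {?a..<?a'}" and zi: "real b ^ p * (z + y) \<in> \<int>"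
      obtain n where n: "real b ^ p * (z + y) = of_int n" using zi Ints_cases by blast
      define E where "E = max p K"
      have pE: "p \<le> E" "K \<le> E" by (auto simp: E_def)
      have "E < ?m" using p True by (simp add: E_def)
      have bE: "real b ^ E = real b ^ p * real b ^ (E - p)" "real b ^ E = real b ^ K * real b ^ (E - K)"
        using pE by (simp_all add: power_add[symmetric])
      have zq: "z = of_int (n * int b ^ (E - p) - Y * int b ^ (E - K)) / real b ^ E"
      proof -
        have "z = of_int n / real b ^ p - of_int Y / real b ^ K" using n y bpos by (simp add: field_simps)
        also have "\<dots> = of_int (n * int b ^ (E - p)) / real b ^ E - of_int (Y * int b ^ (E - K)) / real b ^ E"
          using bE bpos by (simp add: field_simps)
        finally show ?thesis by (simp add: diff_divide_distrib)
      qed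
      have "GG b j k E" unfolding GG_iff using z zq by blast
      moreover have "1 \<le> E" using p pE by simp
      ultimately show False using mm_props(4)[OF b j] \<open>E < ?m\<close> by blast
    qed
    have "osc b (shifted_levy b \<alpha> (-y)) j (int k) \<le> 2 * w ^ ?m / (1 - w)"
      unfolding osc_eq w_def using osc_le[OF b al aa _ noint] mm_props(1)[OF b j] by simp
    also have "\<dots> \<le> 2 / ((1 - w) * w^K) * w ^ ?m"
    proof -
      have "w^K \<le> 1" using w by (simp add: power_le_one)
      hence "2 * w ^ ?m / (1 - w) * w^K \<le> 2 * w ^ ?m / (1 - w)" using w
        by (intro mult_left_le) auto
      thus ?thesis using w by (simp add: field_simps)
    qed
    finally show ?thesis .
  next
    case False
    have "osc b (shifted_levy b \<alpha> (-y)) j (int k) \<le> 2 * w ^ 1 / (1 - w)"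
      unfolding osc_eq w_def by (rule osc_le[OF b al aa]) auto
    also have "\<dots> \<le> 2 / ((1 - w) * w^K) * w ^ ?m"
    proof -
      have "w^K \<le> w^?m" using w False by (intro power_decreasing) auto
      moreover have "w ^ 1 \<le> 1" using w by simp
      ultimately have le: "w * w^K \<le> 1 * w^?m" using w
        by (intro mult_mono) auto
      have eq: "2 * w ^ 1 / (1 - w) = 2 / ((1 - w) * w^K) * (w * w^K)" using w by (simp add: field_simps)
      have "2 / ((1-w)*w^K) * (w*w^K) \<le> 2/((1-w)*w^K) * w^?m"
        by (rule mult_left_mono) (use le w in auto)
      thus ?thesis using eq by simp
    qed
    finally show ?thesis .
  qed
qed

lemma osc_lower_mm:
  fixes Y :: int
  assumes b: "b \<ge> 2" and al: "\<alpha> > 0" and j: "j \<ge> 1" and K: "K \<ge> 1"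
    and y: "y = of_int Y / real b ^ K"
  defines "w \<equiv> real b powr (-\<alpha>)"
  shows "osc b (shifted_levy b \<alpha> (-y)) j (int k) \<ge> w^K / 4 * w ^ mm b j k"
proof -
  have w: "0 < w" "w < 1" using w_facts[OF b al] by (auto simp: w_def)
  let ?a = "(real k - 1) / real b ^ j" and ?a' = "(real k + 2) / real b ^ j"
  let ?m = "mm b j k"
  have bpos: "real b > 0" using b by simp
  obtain q where q: "of_int q / real b ^ ?m \<in> {?a..<?a'}"
    using mm_props(3)[OF b j, of k] unfolding GG_iff by blast
  define E where "E = max ?m K"
  have pE: "?m \<le> E" "K \<le> E" "1 \<le> E" using K by (auto simp: E_def)
  have bE: "real b ^ E = real b ^ ?m * real b ^ (E - ?m)" "real b ^ E = real b ^ K * real b ^ (E - K)"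
    using pE by (simp_all add: power_add[symmetric])
  have Q1: "of_int q / real b ^ ?m = of_int (q * int b ^ (E - ?m)) / real b ^ E"
    using bE bpos by (simp add: field_simps)
  have Q2: "y = of_int (Y * int b ^ (E - K)) / real b ^ E"
    using bE(2) bpos y by (simp add: field_simps)
  have Q: "of_int q / real b ^ ?m + y = of_int (q * int b ^ (E - ?m) + Y * int b ^ (E - K)) / real b ^ E"
    unfolding Q1 Q2 by (simp add: add_divide_distrib)
  obtain x h where xh: "x \<in> {?a..<?a'}" "x + 2*h \<in> {?a..<?a'}"
    and d: "delta2 (shifted_levy b \<alpha> (-y)) x h \<ge> w^E / 4"
    using delta_lower_pt[OF b al q pE(3) Q] unfolding w_def by blast
  have mem: "\<bar>delta2 (shifted_levy b \<alpha> (-y)) x h\<bar> \<in> oscset (shifted_levy b \<alpha> (-y)) ?a ?a'"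
    unfolding oscset_def using xh by blast
  have "w^E / 4 \<le> Sup (oscset (shifted_levy b \<alpha> (-y)) ?a ?a')"
    by (rule cSup_upper2[OF mem _ oscset_bdd[OF b al]]) (use d in auto)
  moreover have "w^K / 4 * w ^ ?m \<le> w^E / 4"
  proof -
    have "E \<le> ?m + K" by (simp add: E_def)
    hence "w^(?m + K) \<le> w^E" using w by (intro power_decreasing) auto
    thus ?thesis by (simp add: power_add mult.commute)
  qed
  ultimately show ?thesis unfolding osc_eq by simp
qed



lemma GG_int:
  assumes b: "b \<ge> 2" and e: "e \<le> j" and G: "GG b j k e"
  shows "\<exists>q::int. int k - 1 \<le> q * int b ^ (j - e) \<and> q * int b ^ (j - e) < int k + 2"
proof -
  obtain q where q: "of_int q / real b ^ e \<in> {(real k - 1) / real b ^ j..<(real k + 2) / real b ^ j}"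
    using G unfolding GG_iff by blast
  have bj: "real b ^ j = real b ^ e * real b ^ (j - e)" using e by (simp add: power_add[symmetric])
  have bp: "real b ^ e > 0" "real b ^ (j-e) > 0" using b by auto
  have bjp: "real b ^ j > 0" using b by simp
  have X: "of_int q / real b ^ e * real b ^ j = of_int q * real b ^ (j-e)" unfolding bj using b bp by simp
  have "(real k - 1) / real b^j * real b^j \<le> of_int q / real b^e * real b^j"
    using q bjp by (intro mult_right_mono) auto
  moreover have "of_int q / real b^e * real b^j < (real k + 2) / real b^j * real b^j"
    using q bjp by (intro mult_strict_right_mono) auto
  ultimately have q2: "(real k - 1) \<le> of_int q * real b ^ (j - e)" "of_int q * real b ^ (j - e) < real k + 2"
    using bjp X by auto
  have "real_of_int (int k - 1) \<le> real_of_int (q * int b ^ (j - e))"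
       "real_of_int (q * int b ^ (j - e)) < real_of_int (int k + 2)" using q2 by simp_all
  hence "int k - 1 \<le> q * int b ^ (j - e)" "q * int b ^ (j - e) < int k + 2"
    by (simp_all only: of_int_le_iff of_int_less_iff)
  thus ?thesis by blast
qed

lemma mm_large:
  assumes b: "b \<ge> 2" and j: "j \<ge> 2" and k: "k mod b^2 = 2"
  shows "mm b j k \<ge> j - 1"
proof (rule ccontr)
  assume "\<not> mm b j k \<ge> j - 1"
  hence lt: "mm b j k \<le> j - 2" by simp
  let ?e = "mm b j k"
  have j1: "j \<ge> 1" using j by simp
  obtain q where q: "int k - 1 \<le> q * int b ^ (j - ?e)" "q * int b ^ (j - ?e) < int k + 2"
    using GG_int[OF b _ mm_props(3)[OF b j1]] mm_props(2)[OF b j1] by blast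
  define u where "u = int (k div b^2)"
  have ku: "int k = int b^2 * u + 2" using k unfolding u_def
    by (metis div_mult_mod_eq mult.commute of_nat_add of_nat_mult of_nat_numeral of_nat_power)
  define Q where "Q = q * int b ^ (j - ?e - 2)"
  have eq: "j - ?e = 2 + (j - ?e - 2)" using lt j by simp
  have pw: "int b ^ (j - ?e) = int b^2 * int b^(j - ?e - 2)" by (metis eq power_add)
  have qd: "q * int b ^ (j - ?e) = int b^2 * Q" unfolding Q_def pw by simp
  have bb: "(2::int) \<le> int b" using b by simp
  have "(2::int)^2 \<le> int b ^ 2" by (rule power_mono[OF bb]) simp
  hence b4: "int b ^ 2 \<ge> 4" by simp
  have c1: "int b^2 * u < int b^2 * Q" using q(1) ku qd by linarith
  have c2: "int b^2 * Q < int b^2 * (u + 1)" using q(2) ku qd b4 by (simp add: algebra_simps)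
  have bp: "int b ^ 2 > 0" using b by simp
  have "u < Q" using c1 bp by (simp add: mult_less_cancel_left_pos)
  moreover have "Q < u + 1" using c2 bp by (simp add: mult_less_cancel_left_pos)
  ultimately show False by simp
qed

lemma card_mm:
  assumes b: "b \<ge> 2" and e: "1 \<le> e" "e \<le> j"
  shows "card {k \<in> {0..<b^j}. mm b j k = e} \<le> 9 * b^e"
proof -
  have j1: "j \<ge> 1" using e by simp
  define d where "d = int b ^ (j - e)"
  have d1: "d \<ge> 1" using b by (simp add: d_def)
  have bjd: "int b ^ j = int b ^ e * d" unfolding d_def using e by (simp add: power_add[symmetric])
  let ?D = "{-1..int (b^e)} \<times> {0..2::int}"
  let ?f = "\<lambda>(q, t). nat (q * d + t - 1)"
  have sub: "{k \<in> {0..<b^j}. mm b j k = e} \<subseteq> ?f ` ?D"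
  proof
    fix k assume "k \<in> {k \<in> {0..<b^j}. mm b j k = e}"
    hence k: "k < b^j" "mm b j k = e" by auto
    obtain q where q: "int k - 1 \<le> q * d" "q * d < int k + 2"
      using GG_int[OF b e(2) mm_props(3)[OF b j1, of k, unfolded k(2)]] unfolding d_def by auto
    have qge: "q \<ge> -1"
    proof (rule ccontr)
      assume "\<not> q \<ge> -1" hence "q \<le> -2" by simp
      hence "q * d \<le> -2 * d" using d1 by (intro mult_right_mono) auto
      thus False using q d1 by linarith
    qed
    have qle: "q \<le> int (b^e)"
    proof (rule ccontr)
      assume "\<not> q \<le> int (b^e)" hence "q \<ge> int (b^e) + 1" by simp
      hence "q * d \<ge> (int (b^e) + 1) * d" using d1 by (intro mult_right_mono) auto
      moreover have "int k + 1 \<le> int (b^j)" using k by linarith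
      ultimately show False using q bjd d1 by (simp add: algebra_simps)
    qed
    have "(q, int k + 1 - q * d) \<in> ?D" using qge qle q by auto
    moreover have "k = ?f (q, int k + 1 - q * d)" by simp
    ultimately show "k \<in> ?f ` ?D" by blast
  qed
  have "card {k \<in> {0..<b^j}. mm b j k = e} \<le> card (?f ` ?D)"
    by (rule card_mono[OF _ sub]) simp
  also have "\<dots> \<le> card ?D" by (rule card_image_le) simp
  also have "\<dots> = (b^e + 2) * 3" by (simp add: card_cartesian_product nat_add_distrib nat_power_eq)
  also have "\<dots> \<le> 9 * b^e" using b by (simp add: algebra_simps)
  finally show ?thesis .
qed



lemma pow_as_powr:
  assumes b: "b \<ge> 2"
  shows "(real b powr (-a)) ^ m = real b powr (-a * real m)"
proof -
  have "(real b powr (-a)) ^ m = (real b powr (-a)) powr real m" using b by (simp add: powr_realpow)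
  also have "\<dots> = real b powr (-a * real m)" by (simp add: powr_powr)
  finally show ?thesis .
qed

lemma factor_bounds:
  assumes b: "b \<ge> 2" and c: "0 < c" "c \<le> C" and v: "c * (real b powr (-a))^m \<le> v" "v \<le> C * (real b powr (-a))^m"
  shows "min (c powr r) (C powr r) * real b powr (-a * r * real m) \<le> v powr r"
        "v powr r \<le> max (c powr r) (C powr r) * real b powr (-a * r * real m)"
proof -
  define X where "X = (real b powr (-a))^m"
  have Xp: "X > 0" using b by (simp add: X_def)
  have vp: "v > 0" using v(1) c Xp unfolding X_def by (metis mult_pos_pos order_less_le_trans)
  have Xr: "X powr r = real b powr (-a * r * real m)"
    unfolding X_def pow_as_powr[OF b] by (simp add: powr_powr mult_ac)
  have cX: "(c * X) powr r = c powr r * X powr r" "(C * X) powr r = C powr r * X powr r"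
    by (simp_all add: powr_mult)
  have XX: "X powr r \<ge> 0" by simp
  show "min (c powr r) (C powr r) * real b powr (-a * r * real m) \<le> v powr r"
  proof (cases "r \<ge> 0")
    case True
    have "(c * X) powr r \<le> v powr r" using v c Xp True unfolding X_def by (intro powr_mono2) auto
    moreover have "min (c powr r) (C powr r) * X powr r \<le> c powr r * X powr r" using XX
      by (intro mult_right_mono) auto
    ultimately show ?thesis using cX Xr by simp
  next
    case False
    have "(C * X) powr r \<le> v powr r" using v c Xp False vp unfolding X_def by (intro powr_mono2') auto
    moreover have "min (c powr r) (C powr r) * X powr r \<le> C powr r * X powr r" using XX
      by (intro mult_right_mono) auto
    ultimately show ?thesis using cX Xr by simp
  qed
  show "v powr r \<le> max (c powr r) (C powr r) * real b powr (-a * r * real m)"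
  proof (cases "r \<ge> 0")
    case True
    have "v powr r \<le> (C * X) powr r" using v c Xp True vp unfolding X_def by (intro powr_mono2) auto
    moreover have "C powr r * X powr r \<le> max (c powr r) (C powr r) * X powr r" using XX
      by (intro mult_right_mono) auto
    ultimately show ?thesis using cX Xr by simp
  next
    case False
    have "v powr r \<le> (c * X) powr r" using v c Xp False vp unfolding X_def by (intro powr_mono2') auto
    moreover have "c powr r * X powr r \<le> max (c powr r) (C powr r) * X powr r" using XX
      by (intro mult_right_mono) auto
    ultimately show ?thesis using cX Xr by simp
  qed
qed

lemma prod_bounds:
  fixes v lo hi :: "nat \<Rightarrow> real" and E :: "nat \<Rightarrow> real"
  assumes "finite I" "\<And>i. i \<in> I \<Longrightarrow> 0 \<le> lo i * E i \<and> lo i * E i \<le> v i \<and> v i \<le> hi i * E i"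
  shows "prod lo I * prod E I \<le> prod v I" "prod v I \<le> prod hi I * prod E I"
proof -
  have "prod (\<lambda>i. lo i * E i) I \<le> prod v I" by (rule prod_mono) (use assms in auto)
  thus "prod lo I * prod E I \<le> prod v I" by (simp add: prod.distrib)
  have "prod v I \<le> prod (\<lambda>i. hi i * E i) I" by (rule prod_mono) (use assms in \<open>auto intro: order_trans\<close>)
  thus "prod v I \<le> prod hi I * prod E I" by (simp add: prod.distrib)
qed

lemma prod_powr_exp:
  assumes b: "b \<ge> 2"
  shows "(\<Prod>i\<in>I. real b powr (- a i * r i * real m)) = (real b powr (- (\<Sum>i\<in>I. a i * r i))) ^ m"
proof -
  have "(\<Prod>i\<in>I. real b powr (- a i * r i * real m)) = real b powr (\<Sum>i\<in>I. - a i * r i * real m)"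
    using b by (subst powr_sum) auto
  also have "(\<Sum>i\<in>I. - a i * r i * real m) = - (\<Sum>i\<in>I. a i * r i) * real m"
    by (simp add: sum_distrib_right sum_negf)
  also have "real b powr \<dots> = (real b powr (- (\<Sum>i\<in>I. a i * r i))) ^ m"
    using pow_as_powr[OF b, of "\<Sum>i\<in>I. a i * r i" m] by simp
  finally show ?thesis .
qed



locale SB =
  fixes b n :: nat and fs :: "nat \<Rightarrow> real \<Rightarrow> real" and c C \<alpha> r :: "nat \<Rightarrow> real"
  assumes b: "b \<ge> 2"
    and cC: "\<And>i. i \<in> {1..n} \<Longrightarrow> 0 < c i \<and> c i \<le> C i"
    and bnd: "\<And>i j k. i \<in> {1..n} \<Longrightarrow> j \<ge> 1 \<Longrightarrow>
        c i * (real b powr (-\<alpha> i)) ^ mm b j k \<le> osc b (fs i) j (int k) \<and>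
        osc b (fs i) j (int k) \<le> C i * (real b powr (-\<alpha> i)) ^ mm b j k"
begin

definition "s = (\<Sum>i\<in>{1..n}. \<alpha> i * r i)"
definition "z = real b powr (- s)"
definition "A = (\<Prod>i\<in>{1..n}. min (c i powr r i) (C i powr r i))"
definition "B = (\<Prod>i\<in>{1..n}. max (c i powr r i) (C i powr r i))"
definition "P j k = (\<Prod>i\<in>{1..n}. osc b (fs i) j (int k) powr r i)"

lemma zpos: "z > 0" using b by (simp add: z_def)

lemma cpos: "i \<in> {1..n} \<Longrightarrow> 0 < c i" "i \<in> {1..n} \<Longrightarrow> 0 < C i"
  using cC by force+

lemma Apos: "A > 0"
  unfolding A_def
proof (rule prod_pos)
  fix i assume i: "i \<in> {1..n}"
  show "0 < min (c i powr r i) (C i powr r i)" using cpos(1)[OF i] cpos(2)[OF i] by simp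
qed

lemma Bpos: "B > 0"
  unfolding B_def
proof (rule prod_pos)
  fix i assume i: "i \<in> {1..n}"
  show "0 < max (c i powr r i) (C i powr r i)" using cpos(1)[OF i] cpos(2)[OF i] by (simp add: less_max_iff_disj)
qed

lemma P_bounds:
  assumes j: "j \<ge> 1"
  shows "A * z ^ mm b j k \<le> P j k" "P j k \<le> B * z ^ mm b j k"
proof -
  let ?E = "\<lambda>i. real b powr (- \<alpha> i * r i * real (mm b j k))"
  have E: "prod ?E {1..n} = z ^ mm b j k" unfolding z_def s_def by (rule prod_powr_exp[OF b])
  have h: "0 \<le> min (c i powr r i) (C i powr r i) * ?E i \<and>
       min (c i powr r i) (C i powr r i) * ?E i \<le> osc b (fs i) j (int k) powr r i \<and>
       osc b (fs i) j (int k) powr r i \<le> max (c i powr r i) (C i powr r i) * ?E i" if i: "i \<in> {1..n}" for i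
    using factor_bounds[OF b, of "c i" "C i" "\<alpha> i" "mm b j k" "osc b (fs i) j (int k)" "r i"]
      cC[OF i] bnd[OF i j, of k] by auto
  show "A * z ^ mm b j k \<le> P j k" "P j k \<le> B * z ^ mm b j k"
    using prod_bounds[of "{1..n}" "\<lambda>i. min (c i powr r i) (C i powr r i)" ?E
        "\<lambda>i. osc b (fs i) j (int k) powr r i" "\<lambda>i. max (c i powr r i) (C i powr r i)"] h
    unfolding A_def B_def P_def E by auto
qed

lemma P_nonneg: "P j k \<ge> 0" unfolding P_def by (intro prod_nonneg) auto

lemma struct_eq: "structure_fun b n fs r j = (1 / real b ^ j) * (\<Sum>k\<in>{0..<b^j}. P j k)"
  unfolding structure_fun_def P_def by simp

definition "M = max 1 (real b * z)"

lemma sum_z_upper: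
  assumes j: "j \<ge> 1"
  shows "(\<Sum>k\<in>{0..<b^j}. z ^ mm b j k) \<le> 9 * real j * M ^ j"
proof -
  have img: "mm b j ` {0..<b^j} \<subseteq> {1..j}" using mm_props(1,2)[OF b j] by auto
  have "(\<Sum>k\<in>{0..<b^j}. z ^ mm b j k) = (\<Sum>e\<in>{1..j}. \<Sum>k\<in>{k \<in> {0..<b^j}. mm b j k = e}. z ^ mm b j k)"
    by (rule sum.group[symmetric]) (use img in auto)
  also have "\<dots> = (\<Sum>e\<in>{1..j}. real (card {k \<in> {0..<b^j}. mm b j k = e}) * z ^ e)"
    by (intro sum.cong refl) simp
  also have "\<dots> \<le> (\<Sum>e\<in>{1..j}. 9 * M ^ j)"
  proof (intro sum_mono)
    fix e assume e: "e \<in> {1..j}"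
    have "real (card {k \<in> {0..<b^j}. mm b j k = e}) \<le> real (9 * b^e)"
      using card_mm[OF b, of e j] e by (simp only: of_nat_le_iff) auto
    hence "real (card {k \<in> {0..<b^j}. mm b j k = e}) * z ^ e \<le> real (9 * b^e) * z ^ e"
      using zpos by (intro mult_right_mono) auto
    also have "\<dots> = 9 * (real b * z) ^ e" by (simp add: power_mult_distrib)
    also have "\<dots> \<le> 9 * M ^ e" using zpos b unfolding M_def by (intro mult_left_mono power_mono) auto
    also have "\<dots> \<le> 9 * M ^ j" using e unfolding M_def by (intro mult_left_mono power_increasing) auto
    finally show "real (card {k \<in> {0..<b^j}. mm b j k = e}) * z ^ e \<le> 9 * M ^ j" .
  qed
  also have "\<dots> = 9 * real j * M ^ j" by simp
  finally show ?thesis .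
qed

lemma S_upper:
  assumes j: "j \<ge> 1"
  shows "structure_fun b n fs r j \<le> 9 * B * real j * M ^ j / real b ^ j"
proof -
  have "(\<Sum>k\<in>{0..<b^j}. P j k) \<le> (\<Sum>k\<in>{0..<b^j}. B * z ^ mm b j k)"
    by (intro sum_mono P_bounds(2)[OF j])
  also have "\<dots> = B * (\<Sum>k\<in>{0..<b^j}. z ^ mm b j k)" by (simp add: sum_distrib_left)
  also have "\<dots> \<le> B * (9 * real j * M ^ j)" using Bpos by (intro mult_left_mono sum_z_upper[OF j]) auto
  finally have "(\<Sum>k\<in>{0..<b^j}. P j k) \<le> B * (9 * real j * M ^ j)" .
  hence "(1 / real b ^ j) * (\<Sum>k\<in>{0..<b^j}. P j k) \<le> (1 / real b ^ j) * (B * (9 * real j * M ^ j))"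
    using b by (intro mult_left_mono) auto
  thus ?thesis unfolding struct_eq by (simp add: field_simps)
qed

lemma S_lower1:
  assumes j: "j \<ge> 1"
  shows "structure_fun b n fs r j \<ge> A * z / real b ^ j"
proof -
  have "P j 0 \<le> (\<Sum>k\<in>{0..<b^j}. P j k)"
    by (rule member_le_sum) (use b P_nonneg in auto)
  moreover have "A * z \<le> P j 0" using P_bounds(1)[OF j, of 0] mm_0[OF b j] by simp
  ultimately have "A * z \<le> (\<Sum>k\<in>{0..<b^j}. P j k)" by simp
  hence "(1 / real b ^ j) * (A * z) \<le> (1 / real b ^ j) * (\<Sum>k\<in>{0..<b^j}. P j k)"
    using b by (intro mult_left_mono) auto
  thus ?thesis unfolding struct_eq by simp
qed

lemma card_T:
  assumes j: "j \<ge> 2"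
  shows "card {k \<in> {0..<b^j}. k mod b^2 = 2} \<ge> b^(j-2)"
proof -
  let ?f = "\<lambda>u. b^2 * u + 2"
  have b4: "b^2 \<ge> 4" using b by (metis power_mono zero_le_numeral power2_eq_square numeral_times_numeral semiring_norm(12) semiring_norm(13) num_double mult_2 numeral_Bit0)
  have jj: "j = 2 + (j-2)" using j by simp
  have bj: "b^j = b^2 * b^(j-2)" by (metis jj power_add)
  have "?f ` {0..<b^(j-2)} \<subseteq> {k \<in> {0..<b^j}. k mod b^2 = 2}"
  proof
    fix k assume "k \<in> ?f ` {0..<b^(j-2)}"
    then obtain u where u: "u < b^(j-2)" "k = ?f u" by auto
    have "b^2 * u + 2 < b^2 * u + b^2" using b4 by simp
    also have "\<dots> = b^2 * (u + 1)" by (simp add: algebra_simps)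
    also have "\<dots> \<le> b^2 * b^(j-2)" using u by (intro mult_left_mono) auto
    finally have "k < b^j" using u bj by simp
    moreover have "k mod b^2 = 2"
    proof -
      have "k = 2 + u * b^2" using u by simp
      hence "k mod b^2 = 2 mod b^2" by (metis mod_mult_self2 mod_mult_self1 add.commute mult.commute)
      thus ?thesis using b4 by simp
    qed
    ultimately show "k \<in> {k \<in> {0..<b^j}. k mod b^2 = 2}" by simp
  qed
  moreover have "inj_on ?f {0..<b^(j-2)}" using b by (intro inj_onI) simp
  ultimately have "card {0..<b^(j-2)} \<le> card {k \<in> {0..<b^j}. k mod b^2 = 2}"
    by (intro card_inj_on_le) auto
  thus ?thesis by simp
qed

lemma S_lower2:
  assumes j: "j \<ge> 2"
  shows "structure_fun b n fs r j \<ge> A * min 1 (1/z) / real b ^ 2 * z ^ j"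
proof -
  let ?T = "{k \<in> {0..<b^j}. k mod b^2 = 2}"
  have j1: "j \<ge> 1" using j by simp
  have zk: "A * min 1 (1/z) * z ^ j \<le> P j k" if k: "k \<in> ?T" for k
  proof -
    have m1: "mm b j k \<ge> j - 1" using mm_large[OF b j] k by simp
    have m2: "mm b j k \<le> j" using mm_props(2)[OF b j1] .
    have "min 1 (1/z) * z ^ j \<le> z ^ mm b j k"
    proof (cases "mm b j k = j")
      case True thus ?thesis using zpos by (simp add: mult_le_cancel_right1 min_le_iff_disj)
    next
      case False
      hence "mm b j k = j - 1" using m1 m2 by simp
      moreover have "z ^ j = z * z ^ (j - 1)" using j1 by (metis Suc_diff_1 less_le_trans zero_less_one power_Suc)
      ultimately have "z ^ mm b j k = (1/z) * z ^ j" using zpos by simp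
      moreover have "min 1 (1/z) * z ^ j \<le> (1/z) * z ^ j" using zpos by (intro mult_right_mono) auto
      ultimately show ?thesis by simp
    qed
    hence "A * (min 1 (1/z) * z ^ j) \<le> A * z ^ mm b j k" using Apos by (intro mult_left_mono) auto
    thus ?thesis using P_bounds(1)[OF j1, of k] by simp
  qed
  have "(\<Sum>k\<in>?T. A * min 1 (1/z) * z ^ j) \<le> (\<Sum>k\<in>?T. P j k)" by (intro sum_mono zk)
  also have "\<dots> \<le> (\<Sum>k\<in>{0..<b^j}. P j k)" by (intro sum_mono2) (use P_nonneg in auto)
  finally have s1: "real (card ?T) * (A * min 1 (1/z) * z ^ j) \<le> (\<Sum>k\<in>{0..<b^j}. P j k)" by simp
  have nn: "0 \<le> A * min 1 (1/z) * z ^ j" using Apos zpos by simp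
  have "real (b^(j-2)) * (A * min 1 (1/z) * z ^ j) \<le> real (card ?T) * (A * min 1 (1/z) * z ^ j)"
    using card_T[OF j] nn by (intro mult_right_mono) auto
  with s1 have s2: "real b^(j-2) * (A * min 1 (1/z) * z ^ j) \<le> (\<Sum>k\<in>{0..<b^j}. P j k)" by simp
  have jj: "j = 2 + (j-2)" using j by simp
  have bj: "real b^j = real b^2 * real b^(j-2)" by (metis jj power_add)
  have "A * min 1 (1/z) / real b ^ 2 * z ^ j = (1 / real b ^ j) * (real b^(j-2) * (A * min 1 (1/z) * z ^ j))"
    using b unfolding bj by (simp add: field_simps)
  also have "\<dots> \<le> (1 / real b ^ j) * (\<Sum>k\<in>{0..<b^j}. P j k)" using s2 b by (intro mult_left_mono) auto
  finally show ?thesis unfolding struct_eq .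
qed

end


lemma lim1: "((\<lambda>j. (c + ln (real j)) / real j) \<longlongrightarrow> 0) sequentially" by real_asymp
lemma lim2: "((\<lambda>j. c / real j) \<longlongrightarrow> 0) sequentially" by real_asymp

context SB begin

definition "t = min 1 s"
definition "LL = ln (real b)"
definition "F = (if s \<ge> 1 then A * z else A * min 1 (1/z) / real b ^ 2)"

lemma LLpos: "LL > 0" using b by (simp add: LL_def)

lemma Fpos: "F > 0" using Apos zpos b unfolding F_def by auto

lemma Spos: assumes j: "j \<ge> 1" shows "structure_fun b n fs r j > 0"
proof -
  have "0 < A * z / real b ^ j" using Apos zpos b by simp
  thus ?thesis using S_lower1[OF j] by linarith
qed

lemma ln_z: "ln z = - s * LL" using b by (simp add: z_def LL_def)

lemma ln_M: "ln M - LL = - t * LL"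
proof -
  have bz: "real b * z > 0" using b zpos by simp
  have lbz: "ln (real b * z) = LL - s * LL" using b zpos by (simp add: ln_mult ln_z LL_def)
  show ?thesis
  proof (cases "s \<ge> 1")
    case True
    have "LL * 1 \<le> LL * s" using True LLpos by (intro mult_left_mono) auto
    hence "ln (real b * z) \<le> 0" using lbz by (simp add: algebra_simps)
    hence "real b * z \<le> 1" using bz by simp
    hence "M = 1" by (simp add: M_def)
    thus ?thesis using True by (simp add: t_def)
  next
    case False
    have "LL * s \<le> LL * 1" using False LLpos by (intro mult_left_mono) auto
    hence "ln (real b * z) \<ge> 0" using lbz by (simp add: algebra_simps)
    hence "real b * z \<ge> 1" using bz by simp
    hence "M = real b * z" by (simp add: M_def)
    thus ?thesis using False lbz by (simp add: t_def)
  qed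
qed

lemma ratio_lower:
  assumes j: "j \<ge> 1"
  shows "ln (structure_fun b n fs r j) / ln (1 / real b ^ j) \<ge> t - (ln (9 * B) + ln (real j)) / (real j * LL)"
proof -
  let ?S = "structure_fun b n fs r j"
  have Mpos: "M > 0" by (simp add: M_def)
  have jp: "real j > 0" using j by simp
  have ub: "?S \<le> 9 * B * real j * M ^ j / real b ^ j" by (rule S_upper[OF j])
  have lnS: "ln ?S \<le> ln (9 * B * real j * M ^ j / real b ^ j)"
    using Spos[OF j] ub by simp
  also have "\<dots> = ln (9 * B) + ln (real j) + real j * (ln M - LL)"
    using Bpos Mpos jp b by (simp add: ln_mult ln_div ln_realpow LL_def algebra_simps)
  also have "\<dots> = ln (9 * B) + ln (real j) - real j * t * LL" by (simp add: ln_M)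
  finally have lnS': "ln ?S \<le> ln (9 * B) + ln (real j) - real j * t * LL" .
  have den: "ln (1 / real b ^ j) = - (real j * LL)" using b by (simp add: ln_div ln_realpow LL_def)
  have dn: "- (real j * LL) < 0" using jp LLpos by simp
  have X1: "(ln (9 * B) + ln (real j) - real j * t * LL) / (- (real j * LL)) \<le> ln ?S / (- (real j * LL))"
    by (rule divide_right_mono_neg[OF lnS']) (use dn in simp)
  have X2: "(ln (9 * B) + ln (real j) - real j * t * LL) / (- (real j * LL))
     = t - (ln (9 * B) + ln (real j)) / (real j * LL)"
    using jp LLpos by (simp add: field_simps)
  have X3: "ln ?S / ln (1 / real b ^ j) = ln ?S / (- (real j * LL))" by (simp only: den)
  show ?thesis unfolding X3 using order_trans[OF eq_refl[OF X2[symmetric]] X1] .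
qed

lemma ratio_upper:
  assumes j: "j \<ge> 2"
  shows "ln (structure_fun b n fs r j) / ln (1 / real b ^ j) \<le> t - ln F / (real j * LL)"
proof -
  let ?S = "structure_fun b n fs r j"
  have j1: "j \<ge> 1" using j by simp
  have jp: "real j > 0" using j by simp
  have lnS: "ln F - real j * t * LL \<le> ln ?S"
  proof (cases "s \<ge> 1")
    case True
    have "A * z / real b ^ j \<le> ?S" by (rule S_lower1[OF j1])
    moreover have "0 < A * z / real b ^ j" using Apos zpos b by simp
    ultimately have "ln (A * z / real b ^ j) \<le> ln ?S" using Spos[OF j1] by simp
    moreover have "ln (A * z / real b ^ j) = ln F - real j * t * LL"
    proof -
      have "ln (A * z / real b ^ j) = ln (A * z) - ln (real b ^ j)"
        by (rule ln_divide_pos) (use Apos zpos b in simp_all)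
      also have "ln (real b ^ j) = real j * LL" using b by (simp add: ln_realpow LL_def)
      also have "ln (A * z) = ln F" using True by (simp add: F_def)
      finally have "ln (A * z / real b ^ j) = ln F - real j * LL" .
      moreover have "t = 1" using True by (simp add: t_def)
      ultimately show ?thesis by simp
    qed
    ultimately show ?thesis by simp
  next
    case False
    have "A * min 1 (1/z) / real b ^ 2 * z ^ j \<le> ?S" by (rule S_lower2[OF j])
    moreover have "0 < A * min 1 (1/z) / real b ^ 2 * z ^ j" using Apos zpos b by simp
    ultimately have "ln (A * min 1 (1/z) / real b ^ 2 * z ^ j) \<le> ln ?S" using Spos[OF j1] by simp
    moreover have "ln (A * min 1 (1/z) / real b ^ 2 * z ^ j) = ln F - real j * t * LL"
    proof -
      have X: "0 < A * min 1 (1/z) / real b ^ 2" using Apos zpos b by simp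
      have "ln (A * min 1 (1/z) / real b ^ 2 * z ^ j) = ln (A * min 1 (1/z) / real b ^ 2) + ln (z^j)"
        by (rule ln_mult_pos[OF X]) (use zpos in simp)
      also have "ln (z^j) = - real j * s * LL" using zpos by (simp add: ln_realpow ln_z)
      finally show ?thesis using False by (simp add: F_def t_def)
    qed
    ultimately show ?thesis by simp
  qed
  have den: "ln (1 / real b ^ j) = - (real j * LL)" using b by (simp add: ln_div ln_realpow LL_def)
  have dn: "- (real j * LL) < 0" using jp LLpos by simp
  have X1: "ln ?S / (- (real j * LL)) \<le> (ln F - real j * t * LL) / (- (real j * LL))"
    by (rule divide_right_mono_neg[OF lnS]) (use dn in simp)
  have X2: "(ln F - real j * t * LL) / (- (real j * LL)) = t - ln F / (real j * LL)"
    using jp LLpos by (simp add: field_simps)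
  have X3: "ln ?S / ln (1 / real b ^ j) = ln ?S / (- (real j * LL))" by (simp only: den)
  show ?thesis unfolding X3 using order_trans[OF X1 eq_refl[OF X2]] .
qed

lemma ratio_lim:
  "((\<lambda>j. ln (structure_fun b n fs r j) / ln (1 / real b ^ j)) \<longlongrightarrow> t) sequentially"
proof (rule tendsto_sandwich)
  show "eventually (\<lambda>j. t - (ln (9 * B) + ln (real j)) / (real j * LL) \<le>
          ln (structure_fun b n fs r j) / ln (1 / real b ^ j)) sequentially"
    using eventually_ge_at_top[of "1::nat"] by eventually_elim (rule ratio_lower)
  show "eventually (\<lambda>j. ln (structure_fun b n fs r j) / ln (1 / real b ^ j) \<le> t - ln F / (real j * LL)) sequentially"
    using eventually_ge_at_top[of "2::nat"] by eventually_elim (rule ratio_upper)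
  have l1: "((\<lambda>j. (ln (9 * B) + ln (real j)) / real j) \<longlongrightarrow> 0) sequentially" by (rule lim1)
  have l2: "((\<lambda>j. ln F / real j) \<longlongrightarrow> 0) sequentially" by (rule lim2)
  have "((\<lambda>j. t - (1/LL) * ((ln (9 * B) + ln (real j)) / real j)) \<longlongrightarrow> t - (1/LL) * 0) sequentially"
    by (intro tendsto_intros l1)
  moreover have "(\<lambda>j. t - (1/LL) * ((ln (9 * B) + ln (real j)) / real j)) =
      (\<lambda>j. t - (ln (9 * B) + ln (real j)) / (real j * LL))" by (rule ext) (simp add: field_simps)
  ultimately show "((\<lambda>j. t - (ln (9 * B) + ln (real j)) / (real j * LL)) \<longlongrightarrow> t) sequentially" by simp
  have "((\<lambda>j. t - (1/LL) * (ln F / real j)) \<longlongrightarrow> t - (1/LL) * 0) sequentially"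
    by (intro tendsto_intros l2)
  moreover have "(\<lambda>j. t - (1/LL) * (ln F / real j)) = (\<lambda>j. t - ln F / (real j * LL))"
    by (rule ext) (simp add: field_simps)
  ultimately show "((\<lambda>j. t - ln F / (real j * LL)) \<longlongrightarrow> t) sequentially" by simp
qed

lemma scaling_eq: "scaling_fun b n fs r = ereal (min 1 s)"
proof -
  have "((\<lambda>j. ereal (ln (structure_fun b n fs r j) / ln (1 / real b ^ j))) \<longlongrightarrow> ereal t) sequentially"
    using ratio_lim by (rule tendsto_ereal)
  hence "liminf (\<lambda>j. ereal (ln (structure_fun b n fs r j) / ln (1 / real b ^ j))) = ereal t"
    by (intro lim_imp_Liminf) auto
  thus ?thesis unfolding scaling_fun_def t_def by simp
qed

end


lemma ereal_aux: "(1::ereal) - ereal a + ereal c = ereal (1 - a + c)"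
  by (simp add: one_ereal_def)

lemma sum_delta1:
  fixes f :: "nat \<Rightarrow> real" and S :: "nat set"
  assumes "finite S" "a \<in> S"
  shows "(\<Sum>l\<in>S. f l * (if l = a then x else 0)) = f a * x"
proof -
  have "(\<Sum>l\<in>S. f l * (if l = a then x else 0)) = (\<Sum>l\<in>S. if l = a then f l * x else 0)"
    by (intro sum.cong) auto
  also have "\<dots> = f a * x" using assms by simp
  finally show ?thesis .
qed

lemma sum_delta2:
  fixes f :: "nat \<Rightarrow> real" and S :: "nat set"
  assumes "finite S" "a \<in> S" "i \<in> S" "i \<noteq> a"
  shows "(\<Sum>l\<in>S. f l * ((if l = a then x else 0) + (if l = i then y else 0))) = f a * x + f i * y"
proof -
  have "(\<Sum>l\<in>S. f l * ((if l = a then x else 0) + (if l = i then y else 0)))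
     = (\<Sum>l\<in>S. f l * (if l = a then x else 0)) + (\<Sum>l\<in>S. f l * (if l = i then y else 0))"
    by (simp add: distrib_left sum.distrib)
  thus ?thesis using sum_delta1[OF assms(1,2)] sum_delta1[OF assms(1,3)] by simp
qed

lemma INF_minf:
  fixes V :: "'a \<Rightarrow> real"
  assumes "\<And>M. \<exists>r. V r < M"
  shows "(INF r\<in>UNIV. ereal (V r)) = -\<infinity>"
proof -
  have "(INF r\<in>UNIV. ereal (V r)) = bot"
    unfolding INF_eq_bot_iff
  proof (intro allI impI)
    fix x :: ereal assume "x > bot"
    hence x: "x > -\<infinity>" by (simp add: bot_ereal_def)
    show "\<exists>i\<in>UNIV. ereal (V i) < x"
    proof (cases x)
      case (real m)
      then obtain r where "V r < m" using assms by blast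
      thus ?thesis using real by auto
    next
      case PInf
      obtain r where "V r < 0" using assms by blast
      thus ?thesis using PInf by auto
    next
      case MInf thus ?thesis using x by simp
    qed
  qed
  thus ?thesis by (simp add: bot_ereal_def)
qed

lemma legendre_calc:
  fixes b n :: nat and fs :: "nat \<Rightarrow> real \<Rightarrow> real" and \<alpha> H :: "nat \<Rightarrow> real"
  assumes n: "n \<ge> 2" and al: "\<forall>i\<in>{1..n}. \<alpha> i > 0"
    and zeta: "\<And>r. scaling_fun b n fs r = ereal (min 1 (\<Sum>i\<in>{1..n}. \<alpha> i * r i))"
  shows "legendre_spectrum b n fs H =
    (if (\<forall>i\<in>{1..n}. 0 \<le> H i \<and> H i \<le> \<alpha> i) \<and> (\<forall>i\<in>{2..n}. H i = \<alpha> i / \<alpha> 1 * H 1)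
     then ereal (H 1 / \<alpha> 1) else -\<infinity>)"
proof -
  define V where "V r = 1 - min 1 (\<Sum>i\<in>{1..n}. \<alpha> i * r i) + (\<Sum>i\<in>{1..n}. H i * r i)" for r :: "nat \<Rightarrow> real"
  have L: "legendre_spectrum b n fs H = (INF r\<in>UNIV. ereal (V r))"
    unfolding legendre_spectrum_def zeta V_def by (subst ereal_aux) (rule refl)
  have one: "1 \<in> {1..n}" using n by simp
  have a1: "\<alpha> 1 > 0" using al one by blast
  define c where "c = H 1 / \<alpha> 1"
  have H1: "H 1 = c * \<alpha> 1" using a1 by (simp add: c_def)
  let ?r1 = "\<lambda>\<tau>::real. (\<lambda>l::nat. if l = 1 then \<tau> / \<alpha> 1 else 0)"
  have s1: "(\<Sum>i\<in>{1..n}. \<alpha> i * ?r1 \<tau> i) = \<tau>" for \<tau>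
    using sum_delta1[of "{1..n}" 1 \<alpha> "\<tau> / \<alpha> 1"] one a1 by simp
  have h1: "(\<Sum>i\<in>{1..n}. H i * ?r1 \<tau> i) = c * \<tau>" for \<tau>
    using sum_delta1[of "{1..n}" 1 H "\<tau> / \<alpha> 1"] one a1 by (simp add: c_def)
  have V1: "V (?r1 \<tau>) = 1 - min 1 \<tau> + c * \<tau>" for \<tau> unfolding V_def s1 h1 ..
  show ?thesis
  proof (cases "\<forall>i\<in>{2..n}. H i = \<alpha> i / \<alpha> 1 * H 1")
    case pr: True
    have Hc: "H i = c * \<alpha> i" if "i \<in> {1..n}" for i
    proof (cases "i = 1")
      case True thus ?thesis using H1 by simp
    next
      case False
      hence "i \<in> {2..n}" using that by auto
      thus ?thesis using pr a1 by (simp add: c_def)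
    qed
    have hV: "V r = 1 - min 1 (\<Sum>i\<in>{1..n}. \<alpha> i * r i) + c * (\<Sum>i\<in>{1..n}. \<alpha> i * r i)" for r
    proof -
      have "(\<Sum>i\<in>{1..n}. H i * r i) = (\<Sum>i\<in>{1..n}. c * (\<alpha> i * r i))"
        by (intro sum.cong) (auto simp: Hc)
      thus ?thesis unfolding V_def by (simp add: sum_distrib_left)
    qed
    show ?thesis
    proof (cases "\<forall>i\<in>{1..n}. 0 \<le> H i \<and> H i \<le> \<alpha> i")
      case box: True
      have c0: "0 \<le> c" using box one a1 by (simp add: c_def)
      have c1: "c \<le> 1" using box one a1 by (simp add: c_def)
      have low: "c \<le> V r" for r
      proof -
        define s where "s = (\<Sum>i\<in>{1..n}. \<alpha> i * r i)"
        have "c \<le> 1 - min 1 s + c * s"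
        proof (cases "s \<ge> 1")
          case True
          have "c * 1 \<le> c * s" using c0 True by (intro mult_left_mono) auto
          thus ?thesis using True by simp
        next
          case False
          have "(1 - c) * s \<le> (1 - c) * 1" using c1 False by (intro mult_left_mono) auto
          thus ?thesis using False by (simp add: algebra_simps)
        qed
        thus ?thesis unfolding hV s_def .
      qed
      have "(INF r\<in>UNIV. ereal (V r)) = ereal c"
      proof (rule antisym)
        show "(INF r\<in>UNIV. ereal (V r)) \<le> ereal c"
          using INF_lower[of "?r1 1" UNIV "\<lambda>r. ereal (V r)"] V1[of 1] by simp
        show "ereal c \<le> (INF r\<in>UNIV. ereal (V r))"
          by (rule INF_greatest) (use low in simp)
      qed
      thus ?thesis using L box pr by (simp add: c_def)
    next
      case nobox: False
      then obtain l where l: "l \<in> {1..n}" "\<not> (0 \<le> H l \<and> H l \<le> \<alpha> l)" by blast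
      have al_l: "\<alpha> l > 0" using al l by blast
      have "c < 0 \<or> c > 1"
      proof (rule ccontr)
        assume "\<not> (c < 0 \<or> c > 1)"
        hence "0 \<le> c" "c \<le> 1" by auto
        hence "0 \<le> c * \<alpha> l" "c * \<alpha> l \<le> 1 * \<alpha> l" using al_l by (auto intro: mult_right_mono)
        thus False using l Hc[OF l(1)] by simp
      qed
      have "(INF r\<in>UNIV. ereal (V r)) = -\<infinity>"
      proof (rule INF_minf)
        fix M :: real
        show "\<exists>r. V r < M"
        proof (cases "c > 1")
          case True
          define \<tau> where "\<tau> = min 0 ((M - 2) / (c - 1))"
          have t0: "\<tau> \<le> 0" by (simp add: \<tau>_def)
          have "(c - 1) * \<tau> \<le> (c - 1) * ((M - 2) / (c - 1))" using True
            by (intro mult_left_mono) (auto simp: \<tau>_def)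
          hence "(c - 1) * \<tau> \<le> M - 2" using True by simp
          hence "V (?r1 \<tau>) < M" unfolding V1 using t0 by (simp add: algebra_simps)
          thus ?thesis by blast
        next
          case False
          hence cn: "c < 0" using \<open>c < 0 \<or> c > 1\<close> by simp
          define \<tau> where "\<tau> = max 1 ((M - 1) / c)"
          have t1: "\<tau> \<ge> 1" by (simp add: \<tau>_def)
          have "c * \<tau> \<le> c * ((M - 1) / c)" using cn
            by (intro mult_left_mono_neg) (auto simp: \<tau>_def)
          hence "c * \<tau> \<le> M - 1" using cn by simp
          hence "V (?r1 \<tau>) < M" unfolding V1 using t1 by simp
          thus ?thesis by blast
        qed
      qed
      thus ?thesis using L nobox by simp
    qed
  next
    case noprop: False
    then obtain i where i: "i \<in> {2..n}" "H i \<noteq> \<alpha> i / \<alpha> 1 * H 1" by blast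
    have iS: "i \<in> {1..n}" "i \<noteq> 1" using i by auto
    define D where "D = \<alpha> i * H 1 - \<alpha> 1 * H i"
    have D: "D \<noteq> 0"
    proof
      assume "D = 0"
      hence e: "\<alpha> 1 * H i = \<alpha> i * H 1" by (simp add: D_def)
      have "H i = \<alpha> i / \<alpha> 1 * H 1" using a1 e by (simp add: field_simps)
      thus False using i by simp
    qed
    let ?r2 = "\<lambda>\<tau>::real. (\<lambda>l::nat. (if l = 1 then \<tau> * \<alpha> i else 0) + (if l = i then - \<tau> * \<alpha> 1 else 0))"
    have s2: "(\<Sum>l\<in>{1..n}. \<alpha> l * ?r2 \<tau> l) = 0" for \<tau>
    proof -
      have "(\<Sum>l\<in>{1..n}. \<alpha> l * ?r2 \<tau> l) = \<alpha> 1 * (\<tau> * \<alpha> i) + \<alpha> i * (- \<tau> * \<alpha> 1)"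
        by (rule sum_delta2) (use one iS in auto)
      thus ?thesis by (simp add: algebra_simps)
    qed
    have h2: "(\<Sum>l\<in>{1..n}. H l * ?r2 \<tau> l) = \<tau> * D" for \<tau>
    proof -
      have "(\<Sum>l\<in>{1..n}. H l * ?r2 \<tau> l) = H 1 * (\<tau> * \<alpha> i) + H i * (- \<tau> * \<alpha> 1)"
        by (rule sum_delta2) (use one iS in auto)
      thus ?thesis by (simp add: D_def algebra_simps)
    qed
    have V2: "V (?r2 \<tau>) = 1 + \<tau> * D" for \<tau> unfolding V_def s2 h2 by simp
    have "(INF r\<in>UNIV. ereal (V r)) = -\<infinity>"
    proof (rule INF_minf)
      fix M :: real
      have "V (?r2 ((M - 2) / D)) = M - 1" using D unfolding V2 by simp
      hence "V (?r2 ((M - 2) / D)) < M" by simp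
      thus "\<exists>r. V r < M" by blast
    qed
    thus ?thesis using L noprop by simp
  qed
qed



lemma common_denominator:
  fixes y :: "nat \<Rightarrow> real"
  assumes b: "b \<ge> 2" and y1: "y 1 = 0"
    and ys: "\<forall>i\<in>{2..n}. 0 \<le> y i \<and> y i < 1 \<and> b_adic_rational b (y i)"
  shows "\<exists>K Y. K \<ge> 1 \<and> (\<forall>i\<in>{1..n}. y i = of_int (Y i) / real b ^ K)"
proof -
  have "\<forall>i\<in>{1..n}. \<exists>p. y i = of_int (fst p) / real b ^ (snd p)"
  proof
    fix i assume i: "i \<in> {1..n}"
    show "\<exists>p. y i = of_int (fst p) / real b ^ (snd p)"
    proof (cases "i = 1")
      case True thus ?thesis using y1 by (intro exI[of _ "(0, 0)"]) simp
    next
      case False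
      hence "i \<in> {2..n}" using i by auto
      then obtain k m where "y i = of_int k / real b ^ m" using ys unfolding b_adic_rational_def by blast
      thus ?thesis by (intro exI[of _ "(k, m)"]) simp
    qed
  qed
  then obtain p where p: "\<forall>i\<in>{1..n}. y i = of_int (fst (p i)) / real b ^ (snd (p i))"
    by metis
  define K where "K = Suc (Max ((\<lambda>i. snd (p i)) ` {1..n}))"
  define Y where "Y i = fst (p i) * int b ^ (K - snd (p i))" for i
  have "y i = of_int (Y i) / real b ^ K" if i: "i \<in> {1..n}" for i
  proof -
    have le: "snd (p i) \<le> K" unfolding K_def using i by (simp add: le_SucI)
    have bK: "real b ^ K = real b ^ snd (p i) * real b ^ (K - snd (p i))"
      using le by (simp add: power_add[symmetric])
    have bp: "real b ^ snd (p i) > 0" "real b ^ (K - snd (p i)) > 0" using b by auto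
    show ?thesis using p i bK bp b by (simp add: Y_def)
  qed
  moreover have "K \<ge> 1" by (simp add: K_def)
  ultimately show ?thesis by blast
qed

theorem mainTheorem2:
  fixes b n :: nat and \<alpha> y H :: "nat \<Rightarrow> real"
  assumes "b \<ge> 2" and "n \<ge> 2"
    and "\<forall>i\<in>{1..n}. \<alpha> i > 0"
    and "y 1 = 0"
    and "\<forall>i\<in>{2..n}. 0 \<le> y i \<and> y i < 1 \<and> b_adic_rational b (y i)"
  shows "legendre_spectrum b n (\<lambda>i. shifted_levy b (\<alpha> i) (- y i)) H =
    (if (\<forall>i\<in>{1..n}. 0 \<le> H i \<and> H i \<le> \<alpha> i) \<and> (\<forall>i\<in>{2..n}. H i = \<alpha> i / \<alpha> 1 * H 1)
     then ereal (H 1 / \<alpha> 1) else -\<infinity>)"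
proof -
  note b = assms(1) and al = assms(3)
  obtain K Y where K: "K \<ge> 1" and Y: "\<forall>i\<in>{1..n}. y i = of_int (Y i) / real b ^ K"
    using common_denominator[OF assms(1,4,5)] by blast
  define fs where "fs = (\<lambda>i. shifted_levy b (\<alpha> i) (- y i))"
  define c where "c i = (real b powr (-\<alpha> i))^K / 4" for i
  define C where "C i = 2 / ((1 - real b powr (-\<alpha> i)) * (real b powr (-\<alpha> i))^K)" for i
  have cC: "0 < c i \<and> c i \<le> C i" if i: "i \<in> {1..n}" for i
  proof -
    define w where "w = real b powr (-\<alpha> i)"
    have w: "0 < w" "w < 1" using w_facts[OF b, of "\<alpha> i"] al i by (auto simp: w_def)
    have wK: "w^K \<le> 1" "w^K > 0" using w by (auto simp: power_le_one)
    have "c i \<le> 1/4" using wK by (simp add: c_def w_def[symmetric])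
    moreover have "2 \<le> C i"
    proof -
      have "(1 - w) * w^K \<le> 1 * 1" using w wK by (intro mult_mono) auto
      moreover have "(1 - w) * w^K > 0" using w wK by simp
      ultimately show ?thesis by (simp add: C_def w_def[symmetric] field_simps)
    qed
    moreover have "c i > 0" using wK by (simp add: c_def w_def[symmetric])
    ultimately show ?thesis by simp
  qed
  have bnd: "c i * (real b powr (-\<alpha> i)) ^ mm b j k \<le> osc b (fs i) j (int k) \<and>
        osc b (fs i) j (int k) \<le> C i * (real b powr (-\<alpha> i)) ^ mm b j k"
    if i: "i \<in> {1..n}" and j: "j \<ge> 1" for i j k
  proof -
    have ai: "\<alpha> i > 0" using al i by blast
    have yi: "y i = of_int (Y i) / real b ^ K" using Y i by blast
    show ?thesis
      using osc_upper_mm[OF b ai j K yi, of k] osc_lower_mm[OF b ai j K yi, of k]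
      unfolding fs_def c_def C_def by simp
  qed
  have zeta: "scaling_fun b n fs r = ereal (min 1 (\<Sum>i\<in>{1..n}. \<alpha> i * r i))" for r
  proof -
    interpret SB b n fs c C \<alpha> r
      by unfold_locales (use b cC bnd in auto)
    show ?thesis using scaling_eq unfolding s_def .
  qed
  show ?thesis unfolding fs_def[symmetric]
    by (rule legendre_calc[OF assms(2,3) zeta])
qed



end
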